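(* Let $D$ be a tournament and $T\subseteq V(D)$. Suppose an arc $e\in A(D)$ is contained in some minimum-size $T$-feedback arc set of $D$, and let $D'$ be the tournament obtained from $D$ by reversing the arc $e$. Then for every arc set $S$ with $e\in S$: $S$ is a minimum $T$-feedback arc set of $D$ if and only if $S\setminus\{e\}$ is a minimum $T$-feedback arc set of $D'$.
   Context: A $T$-cycle is a directed cycle containing at least one vertex of $T$. A $T$-feedback arc set of a digraph $D$ is a set $S\subseteq A(D)$ such that $D-S$ contains no $T$-cycle; it is minimum if it has the smallest possible size. *)

theory Defs
  imports Main
begin

definition tournament :: "'a set \<Rightarrow> ('a \<times> 'a) set \<Rightarrow> bool" where
  "tournament V A \<longleftrightarrow> finite V \<and> A \<subseteq> V \<times> V \<and> (\<forall>v. (v, v) \<notin> A) \<and>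
     (\<forall>u\<in>V. \<forall>v\<in>V. u \<noteq> v \<longrightarrow> ((u, v) \<in> A \<longleftrightarrow> (v, u) \<notin> A))"

definition dir_cycle :: "('a \<times> 'a) set \<Rightarrow> 'a list \<Rightarrow> bool" where
  "dir_cycle A vs \<longleftrightarrow> length vs \<ge> 2 \<and> distinct vs \<and>
     (\<forall>i < length vs. (vs ! i, vs ! ((i + 1) mod length vs)) \<in> A)"

definition T_cycle :: "('a \<times> 'a) set \<Rightarrow> 'a set \<Rightarrow> 'a list \<Rightarrow> bool" where
  "T_cycle A T vs \<longleftrightarrow> dir_cycle A vs \<and> set vs \<inter> T \<noteq> {}"

definition T_fas :: "('a \<times> 'a) set \<Rightarrow> 'a set \<Rightarrow> ('a \<times> 'a) set \<Rightarrow> bool" where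
  "T_fas A T S \<longleftrightarrow> S \<subseteq> A \<and> \<not> (\<exists>vs. T_cycle (A - S) T vs)"

definition min_T_fas :: "('a \<times> 'a) set \<Rightarrow> 'a set \<Rightarrow> ('a \<times> 'a) set \<Rightarrow> bool" where
  "min_T_fas A T S \<longleftrightarrow> T_fas A T S \<and> (\<forall>S'. T_fas A T S' \<longrightarrow> card S \<le> card S')"

definition reverse_arc :: "('a \<times> 'a) set \<Rightarrow> 'a \<times> 'a \<Rightarrow> ('a \<times> 'a) set" where
  "reverse_arc A e = (A - {e}) \<union> {(snd e, fst e)}"

end

theory Submission
  imports Defs
begin

lemma cycle_trancl_aux:
  assumes "dir_cycle B vs" "i < length vs" "k \<ge> 1"
  shows "(vs ! i, vs ! ((i + k) mod length vs)) \<in> B\<^sup>+"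
  using assms(3)
proof (induction k rule: dec_induct)
  case base
  then show ?case using assms unfolding dir_cycle_def by auto
next
  case (step k)
  let ?n = "length vs"
  have "?n > 0" using assms(2) by (metis gr0I less_nat_zero_code)
  have "((i + k) mod ?n) < ?n" using \<open>?n > 0\<close> by simp
  then have "(vs ! ((i + k) mod ?n), vs ! ((((i + k) mod ?n) + 1) mod ?n)) \<in> B"
    using assms(1) unfolding dir_cycle_def by blast
  moreover have "(((i + k) mod ?n) + 1) mod ?n = (i + Suc k) mod ?n"
    by (simp add: mod_Suc_eq)
  ultimately show ?case using step.IH by (metis trancl_into_trancl)
qed

lemma cycle_trancl:
  assumes "dir_cycle B vs" "w \<in> set vs"
  shows "(w, w) \<in> B\<^sup>+"
proof -
  obtain i where i: "i < length vs" "vs ! i = w" using assms(2) by (meson in_set_conv_nth)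
  have "length vs \<ge> 1" using i by simp
  from cycle_trancl_aux[OF assms(1) i(1) this] i show ?thesis by simp
qed

lemma trancl_path:
  assumes "(x, y) \<in> B\<^sup>+"
  shows "\<exists>p. distinct p \<and> p \<noteq> [] \<and> hd p = x \<and> (\<forall>i. i + 1 < length p \<longrightarrow> (p!i, p!(i+1)) \<in> B) \<and> (last p, y) \<in> B"
  using assms
proof (induction rule: trancl_induct)
  case (base y)
  then show ?case by (intro exI[of _ "[x]"]) auto
next
  case (step y z)
  then obtain p where p: "distinct p" "p \<noteq> []" "hd p = x"
    "\<forall>i. i + 1 < length p \<longrightarrow> (p!i, p!(i+1)) \<in> B" "(last p, y) \<in> B" by blast
  show ?case
  proof (cases "y \<in> set p")
    case True
    then obtain j where j: "j < length p" "p ! j = y" by (meson in_set_conv_nth)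
    let ?q = "take (j+1) p"
    have "distinct ?q" using p(1) by simp
    moreover have "?q \<noteq> []" using j by (cases p) auto
    moreover have "hd ?q = x" using p(2,3) by (simp add: hd_take)
    moreover have "\<forall>i. i + 1 < length ?q \<longrightarrow> (?q!i, ?q!(i+1)) \<in> B" using p(4) by auto
    moreover have "last ?q = y" using j by (simp add: take_Suc_conv_app_nth)
    ultimately show ?thesis using step(2) by metis
  next
    case False
    let ?q = "p @ [y]"
    have "distinct ?q" using p(1) False by simp
    moreover have "?q \<noteq> []" by simp
    moreover have "hd ?q = x" using p(2,3) by simp
    moreover have "\<forall>i. i + 1 < length ?q \<longrightarrow> (?q!i, ?q!(i+1)) \<in> B"
    proof (intro allI impI)
      fix i assume i: "i + 1 < length ?q"
      show "(?q!i, ?q!(i+1)) \<in> B"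
      proof (cases "i + 1 < length p")
        case True then show ?thesis using p(4) by (simp add: nth_append)
      next
        case False
        then have "i = length p - 1" using i by simp
        then show ?thesis using p(2,5) i by (simp add: nth_append last_conv_nth)
      qed
    qed
    ultimately show ?thesis using step(2) by (metis last_snoc)
  qed
qed

lemma trancl_cycle:
  assumes "(w, w) \<in> B\<^sup>+" "\<forall>x. (x, x) \<notin> B"
  shows "\<exists>vs. dir_cycle B vs \<and> w \<in> set vs"
proof -
  obtain p where p: "distinct p" "p \<noteq> []" "hd p = w"
    "\<forall>i. i + 1 < length p \<longrightarrow> (p!i, p!(i+1)) \<in> B" "(last p, w) \<in> B"
    using trancl_path[OF assms(1)] by blast
  have "length p \<noteq> 1"
  proof
    assume "length p = 1"
    then have "last p = w" using p(2,3) by (cases p) auto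
    then show False using p(5) assms(2) by auto
  qed
  moreover have "length p \<noteq> 0" using p(2) by simp
  ultimately have len: "length p \<ge> 2" by arith
  have "\<forall>i < length p. (p ! i, p ! ((i + 1) mod length p)) \<in> B"
  proof (intro allI impI)
    fix i assume i: "i < length p"
    show "(p ! i, p ! ((i + 1) mod length p)) \<in> B"
    proof (cases "i + 1 < length p")
      case True then show ?thesis using p(4) by simp
    next
      case False
      then have "i = length p - 1" using i by simp
      then show ?thesis using p(2,3,5) by (simp add: last_conv_nth hd_conv_nth)
    qed
  qed
  then have "dir_cycle B p" using p(1) len unfolding dir_cycle_def by blast
  moreover have "w \<in> set p" using p(2,3) by auto
  ultimately show ?thesis by blast
qed

lemma T_cycle_mono: "T_cycle X T vs \<Longrightarrow> X \<subseteq> Y \<Longrightarrow> T_cycle Y T vs"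
  unfolding T_cycle_def dir_cycle_def by blast

theorem proposition2:
  fixes V :: "'a set" and A :: "('a \<times> 'a) set" and T :: "'a set"
    and e :: "'a \<times> 'a" and S :: "('a \<times> 'a) set"
  assumes "tournament V A" and "T \<subseteq> V" and "e \<in> A"
    and "\<exists>S0. min_T_fas A T S0 \<and> e \<in> S0"
    and "S \<subseteq> A" and "e \<in> S"
  shows "min_T_fas A T S \<longleftrightarrow> min_T_fas (reverse_arc A e) T (S - {e})"
proof -
  obtain u v where e: "e = (u, v)" by (cases e)
  let ?A' = "reverse_arc A e"
  have A': "?A' = (A - {e}) \<union> {(v, u)}" unfolding reverse_arc_def e by simp
  have AV: "A \<subseteq> V \<times> V" and noloop: "\<forall>x. (x, x) \<notin> A" and finV: "finite V"
    using assms(1) unfolding tournament_def by blast+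
  have finA: "finite A" using AV finV by (meson finite_SigmaI finite_subset)
  have uv: "u \<noteq> v" using noloop assms(3) e by auto
  have uvV: "u \<in> V" "v \<in> V" using AV assms(3) e by auto
  have tt: "\<forall>u\<in>V. \<forall>v\<in>V. u \<noteq> v \<longrightarrow> ((u, v) \<in> A \<longleftrightarrow> (v, u) \<notin> A)"
    using assms(1) unfolding tournament_def by blast
  have vu: "(v, u) \<notin> A" using tt uvV uv assms(3) e by blast
  have L1: "\<exists>S''. T_fas A T S'' \<and> card S'' \<le> card S' + 1" if "T_fas ?A' T S'" for S'
  proof -
    let ?S'' = "(S' - {(v, u)}) \<union> {e}"
    have sub: "S' \<subseteq> ?A'" using that unfolding T_fas_def by blast
    have s1: "?S'' \<subseteq> A" using sub A' assms(3) by blast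
    have s2: "A - ?S'' \<subseteq> ?A' - S'" using A' vu by blast
    have s3: "\<not> (\<exists>vs. T_cycle (?A' - S') T vs)" using that unfolding T_fas_def by blast
    have s4: "\<not> (\<exists>vs. T_cycle (A - ?S'') T vs)"
    proof
      assume "\<exists>vs. T_cycle (A - ?S'') T vs"
      then obtain vs where "T_cycle (A - ?S'') T vs" by blast
      from T_cycle_mono[OF this s2] s3 show False by blast
    qed
    have s5: "T_fas A T ?S''" unfolding T_fas_def using s1 s4 by blast
    have finA': "finite ?A'" using A' finA by simp
    have "finite S'" using sub finA' by (rule finite_subset)
    then have "card ?S'' \<le> card (S' - {(v, u)}) + 1"
      by (simp add: card_insert_if)
    also have "\<dots> \<le> card S' + 1" using \<open>finite S'\<close> by (simp add: card_Diff1_le)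
    finally have "card ?S'' \<le> card S' + 1" .
    with s5 show ?thesis by blast
  qed
  have L3: "T_fas A T S" if "T_fas ?A' T (S - {e})"
  proof -
    have "A - S \<subseteq> ?A' - (S - {e})" using A' assms(6) by auto
    moreover have "\<not> (\<exists>vs. T_cycle (?A' - (S - {e})) T vs)" using that unfolding T_fas_def by blast
    ultimately have "\<not> (\<exists>vs. T_cycle (A - S) T vs)" using T_cycle_mono[of "A - S" T _ "?A' - (S - {e})"] by blast
    then show ?thesis using assms(5) unfolding T_fas_def by blast
  qed
  have L2: "T_fas ?A' T (R - {e})" if R: "min_T_fas A T R" "e \<in> R" for R
  proof -
    let ?B = "A - R"
    have RA: "R \<subseteq> A" using R unfolding min_T_fas_def T_fas_def by blast
    have finR: "finite R" using RA finA finite_subset by blast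
    have "card (R - {e}) < card R" using finR R(2) by (meson card_Diff1_less)
    then have "\<not> T_fas A T (R - {e})" using R(1) unfolding min_T_fas_def by (meson not_le)
    moreover have "R - {e} \<subseteq> A" using RA by blast
    ultimately obtain vs where vs: "T_cycle (A - (R - {e})) T vs" unfolding T_fas_def by blast
    have eq1: "A - (R - {e}) = insert (u, v) ?B" using assms(3) e by auto
    obtain w where w0: "w \<in> T" "w \<in> set vs" using vs unfolding T_cycle_def by blast
    have "dir_cycle (insert (u, v) ?B) vs" using vs eq1 unfolding T_cycle_def by simp
    then have w: "w \<in> T" "(w, w) \<in> (insert (u, v) ?B)\<^sup>+" using w0 by (auto intro: cycle_trancl)
    have noB: "\<not> (\<exists>vs. T_cycle ?B T vs)" using R unfolding min_T_fas_def T_fas_def by blast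
    have irr: "\<forall>x. (x, x) \<notin> ?B" using noloop by blast
    have noT: "\<not> (t \<in> T \<and> (t, t) \<in> ?B\<^sup>+)" for t
      using trancl_cycle[OF _ irr, of t] noB unfolding T_cycle_def by blast
    have eq2: "?A' - (R - {e}) = insert (v, u) ?B" using A' R(2) RA vu by auto
    have "\<not> (\<exists>vs. T_cycle (?A' - (R - {e})) T vs)"
    proof
      assume "\<exists>vs. T_cycle (?A' - (R - {e})) T vs"
      then obtain vs' where vs': "T_cycle (insert (v, u) ?B) T vs'" unfolding eq2 by blast
      obtain w' where w0': "w' \<in> T" "w' \<in> set vs'" using vs' unfolding T_cycle_def by blast
      have "dir_cycle (insert (v, u) ?B) vs'" using vs' unfolding T_cycle_def by simp
      then have w': "w' \<in> T" "(w', w') \<in> (insert (v, u) ?B)\<^sup>+" using w0' by (auto intro: cycle_trancl)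
      have a: "(w, u) \<in> ?B\<^sup>* \<and> (v, w) \<in> ?B\<^sup>*" using w noT unfolding trancl_insert by blast
      have b: "(w', v) \<in> ?B\<^sup>* \<and> (u, w') \<in> ?B\<^sup>*" using w' noT unfolding trancl_insert by blast
      have "(u, v) \<in> ?B\<^sup>*" using b by (meson rtrancl_trans)
      then have "(u, v) \<in> ?B\<^sup>+" using uv by (meson rtranclD)
      then have "(w, w) \<in> ?B\<^sup>+" using a
        by (meson rtrancl_trancl_trancl trancl_rtrancl_trancl)
      then show False using noT w(1) by blast
    qed
    moreover have "R - {e} \<subseteq> ?A'" using RA A' by blast
    ultimately show ?thesis unfolding T_fas_def by blast
  qed
  have finS: "finite S" using assms(5) finA finite_subset by blast
  have cS: "card (S - {e}) + 1 = card S" using finS assms(6)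
    by (metis Suc_eq_plus1 card_Suc_Diff1)
  obtain S0 where S0: "min_T_fas A T S0" "e \<in> S0" using assms(4) by blast
  have finS0: "finite S0" using S0 finA finite_subset unfolding min_T_fas_def T_fas_def by blast
  have cS0: "card (S0 - {e}) + 1 = card S0" using finS0 S0(2)
    by (metis Suc_eq_plus1 card_Suc_Diff1)
  show ?thesis
  proof
    assume m: "min_T_fas A T S"
    have "T_fas ?A' T (S - {e})" using L2[OF m assms(6)] .
    moreover have "card (S - {e}) \<le> card S'" if hS': "T_fas ?A' T S'" for S'
    proof -
      obtain S'' where "T_fas A T S''" "card S'' \<le> card S' + 1" using L1[OF hS'] by blast
      then have "card S \<le> card S' + 1" using m unfolding min_T_fas_def by fastforce
      then show ?thesis using cS by simp
    qed
    ultimately show "min_T_fas ?A' T (S - {e})" unfolding min_T_fas_def by blast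
  next
    assume m: "min_T_fas ?A' T (S - {e})"
    have "T_fas A T S" using L3 m unfolding min_T_fas_def by blast
    moreover have "card S \<le> card S''" if "T_fas A T S''" for S''
    proof -
      have "card (S - {e}) \<le> card (S0 - {e})" using m L2[OF S0] unfolding min_T_fas_def by blast
      then have "card S \<le> card S0" using cS cS0 by simp
      also have "\<dots> \<le> card S''" using S0(1) that unfolding min_T_fas_def by blast
      finally show ?thesis .
    qed
    ultimately show "min_T_fas A T S" unfolding min_T_fas_def by blast
  qed
qed

end
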